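(* For every $n\geq1$, the number of $\mathcal{B}_n$-orbits of right $0/1$-triangles in $[0,1]^n$ equals $\left\lfloor\frac{n}{2}\right\rfloor\left\lceil\frac{n}{2}\right\rceil$.
   Context: A $0/1$-triangle in $[0,1]^n$ is the convex hull of three distinct points of $\{0,1\}^n$; it is right if one of its angles equals $\pi/2$. $\mathcal{B}_n$ is the hyperoctahedral group of symmetries of $[0,1]^n$, acting on $\{0,1\}^n$ by permuting coordinates and complementing a subset of coordinates; triangles are counted up to this action. *)

theory Defs
  imports "HOL-Analysis.Analysis"
begin

text \<open>The n-cube [0,1]^n is modelled in real^'n, where the finite index type 'n
has CARD('n) = n (so n >= 1 automatically, and n is arbitrary).\<close>

definition cube_vertices :: "(real^'n) set" where
  "cube_vertices = {x. \<forall>i. x$i = 0 \<or> x$i = 1}"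

definition vec_angle :: "real^'n \<Rightarrow> real^'n \<Rightarrow> real" where
  "vec_angle u v = arccos (inner u v / (norm u * norm v))"

definition zo_triangle :: "(real^'n) set \<Rightarrow> bool" where
  "zo_triangle T \<longleftrightarrow> (\<exists>a b c. a \<in> cube_vertices \<and> b \<in> cube_vertices \<and> c \<in> cube_vertices \<and>
      a \<noteq> b \<and> a \<noteq> c \<and> b \<noteq> c \<and> T = convex hull {a, b, c})"

definition right_zo_triangle :: "(real^'n) set \<Rightarrow> bool" where
  "right_zo_triangle T \<longleftrightarrow> (\<exists>a b c. a \<in> cube_vertices \<and> b \<in> cube_vertices \<and> c \<in> cube_vertices \<and>
      a \<noteq> b \<and> a \<noteq> c \<and> b \<noteq> c \<and> T = convex hull {a, b, c} \<and>
      vec_angle (b - a) (c - a) = pi / 2)"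

definition hyperoct_map :: "('n \<Rightarrow> 'n) \<Rightarrow> 'n set \<Rightarrow> real^'n \<Rightarrow> real^'n" where
  "hyperoct_map \<sigma> C x = (\<chi> i. if i \<in> C then 1 - x $ (\<sigma> i) else x $ (\<sigma> i))"

definition hyperoct :: "(real^'n \<Rightarrow> real^'n) set" where
  "hyperoct = {hyperoct_map \<sigma> C | \<sigma> C. \<sigma> permutes (UNIV :: 'n set)}"

definition B_orbit :: "(real^'n) set \<Rightarrow> (real^'n) set set" where
  "B_orbit T = {g ` T | g. g \<in> hyperoct}"

end

theory Submission
  imports Defs
begin


abbreviation V where "V \<equiv> cube_vertices"

definition ind :: "'n set \<Rightarrow> real^'n" where
  "ind B = (\<chi> i. if i \<in> B then 1 else 0)"

definition Dset :: "(real^'n) set \<Rightarrow> real set" where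
  "Dset T = {(norm (x - y))^2 | x y. x \<in> T \<inter> V \<and> y \<in> T \<inter> V \<and> x \<noteq> y}"

lemma hull_V:
  assumes "a \<in> V" "b \<in> V" "c \<in> V"
  shows "convex hull {a,b,c} \<inter> V = {a,b,c}"
proof
  show "{a,b,c} \<subseteq> convex hull {a,b,c} \<inter> V" using assms by (auto intro: hull_inc)
next
  show "convex hull {a,b,c} \<inter> V \<subseteq> {a,b,c}"
  proof
    fix x assume "x \<in> convex hull {a,b,c} \<inter> V"
    then obtain u v w where uvw: "0 \<le> u" "0 \<le> v" "0 \<le> w" "u+v+w=1"
      and x: "x = u *\<^sub>R a + v *\<^sub>R b + w *\<^sub>R c" and xV: "x \<in> V"
      unfolding convex_hull_3 by auto
    have ai: "u > 0 \<Longrightarrow> a$i = x$i" for i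
    proof -
      have e: "x$i = u * (a$i) + v * (b$i) + w * (c$i)" using x by simp
      have "a$i = 0 \<or> a$i = 1" "b$i = 0 \<or> b$i = 1" "c$i = 0 \<or> c$i = 1" "x$i = 0 \<or> x$i = 1"
        using assms xV unfolding cube_vertices_def by auto
      moreover assume "u > 0"
      ultimately show ?thesis using e uvw by auto
    qed
    have bi: "v > 0 \<Longrightarrow> b$i = x$i" for i
    proof -
      have e: "x$i = u * (a$i) + v * (b$i) + w * (c$i)" using x by simp
      have "a$i = 0 \<or> a$i = 1" "b$i = 0 \<or> b$i = 1" "c$i = 0 \<or> c$i = 1" "x$i = 0 \<or> x$i = 1"
        using assms xV unfolding cube_vertices_def by auto
      moreover assume "v > 0"
      ultimately show ?thesis using e uvw by auto
    qed
    have ci: "w > 0 \<Longrightarrow> c$i = x$i" for i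
    proof -
      have e: "x$i = u * (a$i) + v * (b$i) + w * (c$i)" using x by simp
      have "a$i = 0 \<or> a$i = 1" "b$i = 0 \<or> b$i = 1" "c$i = 0 \<or> c$i = 1" "x$i = 0 \<or> x$i = 1"
        using assms xV unfolding cube_vertices_def by auto
      moreover assume "w > 0"
      ultimately show ?thesis using e uvw by auto
    qed
    have "u > 0 \<or> v > 0 \<or> w > 0" using uvw by linarith
    then show "x \<in> {a,b,c}" using ai bi ci by (auto simp: vec_eq_iff)
  qed
qed

lemma Dset_tri:
  assumes "a \<in> V" "b \<in> V" "c \<in> V" "a \<noteq> b" "a \<noteq> c" "b \<noteq> c"
  shows "Dset (convex hull {a,b,c}) = {(norm (a-b))^2, (norm (a-c))^2, (norm (b-c))^2}"
  unfolding Dset_def hull_V[OF assms(1-3)]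
  using assms by (auto simp: norm_minus_commute)



lemma hyperoct_comp:
  "hyperoct_map \<sigma> C (hyperoct_map \<tau> D x) = hyperoct_map (\<tau> \<circ> \<sigma>) {i. (i\<in>C) \<noteq> (\<sigma> i \<in> D)} x"
  by (auto simp: hyperoct_map_def vec_eq_iff)

lemma H_comp: "g \<in> hyperoct \<Longrightarrow> h \<in> hyperoct \<Longrightarrow> h \<circ> g \<in> hyperoct"
proof -
  assume "g \<in> hyperoct" "h \<in> hyperoct"
  then obtain \<sigma> C \<tau> D where g: "g = hyperoct_map \<tau> D" "\<tau> permutes UNIV"
     and h: "h = hyperoct_map \<sigma> C" "\<sigma> permutes UNIV" unfolding hyperoct_def by auto
  have "h \<circ> g = hyperoct_map (\<tau> \<circ> \<sigma>) {i. (i\<in>C) \<noteq> (\<sigma> i \<in> D)}"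
    using g h by (auto simp: hyperoct_comp)
  moreover have "\<tau> \<circ> \<sigma> permutes UNIV" using g h by (simp add: permutes_compose)
  ultimately show ?thesis unfolding hyperoct_def by blast
qed

lemma H_inv: "g \<in> hyperoct \<Longrightarrow> \<exists>g'\<in>hyperoct. \<forall>x. g' (g x) = x"
proof -
  assume "g \<in> hyperoct"
  then obtain \<sigma> C where g: "g = hyperoct_map \<sigma> C" "\<sigma> permutes UNIV"
    unfolding hyperoct_def by auto
  let ?g' = "hyperoct_map (inv \<sigma>) {i. inv \<sigma> i \<in> C}"
  have "?g' \<in> hyperoct" unfolding hyperoct_def using g permutes_inv by blast
  moreover have "?g' (g x) = x" for x
    unfolding g hyperoct_comp using permutes_inverses[OF g(2)]
    by (auto simp: hyperoct_map_def vec_eq_iff)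
  ultimately show ?thesis by blast
qed

lemma H_id: "id \<in> hyperoct"
proof -
  have "id = hyperoct_map id {}" by (auto simp: hyperoct_map_def vec_eq_iff fun_eq_iff)
  then show ?thesis unfolding hyperoct_def using permutes_id by blast
qed

lemma H_affine:
  assumes "g \<in> hyperoct" "u + v + w = 1"
  shows "g (u *\<^sub>R a + v *\<^sub>R b + w *\<^sub>R c) = u *\<^sub>R g a + v *\<^sub>R g b + w *\<^sub>R g c"
proof -
  obtain \<sigma> C where g: "g = hyperoct_map \<sigma> C" using assms unfolding hyperoct_def by auto
  have "1 - (u * a $ j + v * b $ j + w * c $ j) = u * (1 - a $ j) + v * (1 - b $ j) + w * (1 - c $ j)" for j
    using assms(2) by (simp add: algebra_simps)
  then show ?thesis unfolding g by (auto simp: hyperoct_map_def vec_eq_iff)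
qed

lemma H_hull:
  assumes "g \<in> hyperoct"
  shows "g ` (convex hull {a,b,c}) = convex hull {g a, g b, g c}"
proof
  show "g ` (convex hull {a,b,c}) \<subseteq> convex hull {g a, g b, g c}"
  proof
    fix y assume "y \<in> g ` (convex hull {a,b,c})"
    then obtain u v w where "0 \<le> u" "0 \<le> v" "0 \<le> w" "u+v+w=1"
      and "y = g (u *\<^sub>R a + v *\<^sub>R b + w *\<^sub>R c)" unfolding convex_hull_3 by blast
    then show "y \<in> convex hull {g a, g b, g c}" unfolding convex_hull_3
      using H_affine[OF assms] by blast
  qed
next
  show "convex hull {g a, g b, g c} \<subseteq> g ` (convex hull {a,b,c})"
  proof
    fix y assume "y \<in> convex hull {g a, g b, g c}"
    then obtain u v w where uvw: "0 \<le> u" "0 \<le> v" "0 \<le> w" "u+v+w=1"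
      and y: "y = u *\<^sub>R g a + v *\<^sub>R g b + w *\<^sub>R g c" unfolding convex_hull_3 by blast
    then have "y = g (u *\<^sub>R a + v *\<^sub>R b + w *\<^sub>R c)" using H_affine[OF assms] by simp
    moreover have "u *\<^sub>R a + v *\<^sub>R b + w *\<^sub>R c \<in> convex hull {a,b,c}"
      unfolding convex_hull_3 using uvw by blast
    ultimately show "y \<in> g ` (convex hull {a,b,c})" by blast
  qed
qed

lemma H_V: "g \<in> hyperoct \<Longrightarrow> x \<in> V \<Longrightarrow> g x \<in> V"
  unfolding hyperoct_def cube_vertices_def hyperoct_map_def by (auto, metis+)

lemma H_norm:
  assumes "g \<in> hyperoct" shows "norm (g x - g y) = norm (x - y)"
proof -
  obtain \<sigma> C where g: "g = hyperoct_map \<sigma> C" "\<sigma> permutes UNIV"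
    using assms unfolding hyperoct_def by auto
  have "(norm (g x - g y))^2 = (\<Sum>i\<in>UNIV. ((x - y) $ \<sigma> i)^2)"
    unfolding dot_square_norm[symmetric] inner_vec_def g
    by (rule sum.cong) (auto simp: hyperoct_map_def power2_eq_square algebra_simps)
  also have "\<dots> = (\<Sum>i\<in>UNIV. ((x - y) $ i)^2)"
    using sum.permute[OF g(2), of "\<lambda>i. ((x - y) $ i)^2"] by (simp add: comp_def)
  also have "\<dots> = (norm (x - y))^2"
    unfolding dot_square_norm[symmetric] inner_vec_def by (simp add: power2_eq_square)
  finally show ?thesis by (simp add: power2_eq_iff_nonneg)
qed

lemma orbit_inv:
  assumes "g \<in> hyperoct" shows "B_orbit (g ` T) = B_orbit T"
proof
  show "B_orbit (g ` T) \<subseteq> B_orbit T"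
  proof
    fix S assume "S \<in> B_orbit (g ` T)"
    then obtain h where h: "h \<in> hyperoct" "S = h ` (g ` T)" unfolding B_orbit_def by auto
    then have "S = (h \<circ> g) ` T" by (simp add: image_comp)
    then show "S \<in> B_orbit T" unfolding B_orbit_def using H_comp[OF assms h(1)] by blast
  qed
next
  obtain g' where g': "g' \<in> hyperoct" "\<And>x. g' (g x) = x" using H_inv[OF assms] by blast
  show "B_orbit T \<subseteq> B_orbit (g ` T)"
  proof
    fix S assume "S \<in> B_orbit T"
    then obtain h where h: "h \<in> hyperoct" "S = h ` T" unfolding B_orbit_def by auto
    have "(h \<circ> g') ` (g ` T) = h ` ((\<lambda>x. g' (g x)) ` T)" by (simp add: image_comp comp_def)
    also have "\<dots> = S" using h g' by simp
    finally have "S = (h \<circ> g') ` (g ` T)" by simp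
    then show "S \<in> B_orbit (g ` T)" unfolding B_orbit_def using H_comp[OF g'(1) h(1)] by blast
  qed
qed



lemma ind_V: "ind B \<in> V" unfolding ind_def cube_vertices_def by auto
lemma zero_V: "0 \<in> V" unfolding cube_vertices_def by auto
lemma ind_eq: "ind B = ind C \<longleftrightarrow> B = C"
  unfolding ind_def vec_eq_iff by auto
lemma ind_empty: "ind {} = 0" unfolding ind_def by (simp add: vec_eq_iff)

lemma sum_indic: "(\<Sum>i\<in>(UNIV::'n::finite set). if i \<in> B then 1 else 0) = real (card B)"
  by (simp add: sum.If_cases)

lemma norm_ind: "(norm (ind B :: real^'n))^2 = real (card B)"
proof -
  have "(norm (ind B :: real^'n))^2 = (\<Sum>i\<in>UNIV. if i \<in> B then 1 else 0)"
    unfolding dot_square_norm[symmetric] inner_vec_def ind_def by (rule sum.cong) auto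
  then show ?thesis using sum_indic by simp
qed

lemma norm_ind2: assumes "B \<inter> C = {}"
  shows "(norm (ind B - ind C :: real^'n))^2 = real (card B) + real (card C)"
proof -
  have "(norm (ind B - ind C :: real^'n))^2 = (\<Sum>i\<in>UNIV. if i \<in> B \<union> C then 1 else 0)"
    unfolding dot_square_norm[symmetric] inner_vec_def ind_def using assms by (intro sum.cong) auto
  also have "\<dots> = real (card (B \<union> C))" by (rule sum_indic)
  also have "\<dots> = real (card B) + real (card C)" using assms by (simp add: card_Un_disjoint)
  finally show ?thesis .
qed

lemma inner_ind: assumes "B \<inter> C = {}" shows "inner (ind B :: real^'n) (ind C) = 0"
  unfolding inner_vec_def ind_def using assms by (intro sum.neutral) auto

lemma Dset_normal:
  assumes "B \<inter> C = {}" "B \<noteq> {}" "C \<noteq> {}"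
  shows "Dset (convex hull {0, ind B, ind C :: real^'n}) = {real (card B), real (card C), real (card B) + real (card C)}"
proof -
  have d: "0 \<noteq> ind B" "0 \<noteq> ind C" "ind B \<noteq> ind C"
    using assms ind_eq[of B "{}"] ind_eq[of C "{}"] ind_eq[of B C] by (auto simp: ind_empty)
  show ?thesis using Dset_tri[OF zero_V ind_V ind_V d] norm_ind2[OF assms(1)] norm_ind[of B] norm_ind[of C]
    by simp
qed

lemma angle_inner:
  assumes "a \<noteq> b" "a \<noteq> c" "vec_angle (b - a) (c - a) = pi / 2"
  shows "inner (b - a) (c - a) = 0"
proof -
  let ?t = "inner (b - a) (c - a) / (norm (b - a) * norm (c - a))"
  have n: "norm (b - a) > 0" "norm (c - a) > 0" using assms by auto
  have "\<bar>inner (b - a) (c - a)\<bar> \<le> norm (b - a) * norm (c - a)" by (rule Cauchy_Schwarz_ineq2)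
  then have "\<bar>?t\<bar> \<le> 1" using n by (simp add: abs_divide divide_le_eq_1)
  moreover have "arccos ?t = arccos 0" using assms(3) unfolding vec_angle_def by simp
  ultimately have "?t = 0" using arccos_eq_iff[of ?t 0] by simp
  then show ?thesis using n by simp
qed

lemma normal_form:
  assumes "right_zo_triangle (T :: (real^'n) set)"
  shows "\<exists>g\<in>hyperoct. \<exists>B C. B \<inter> C = {} \<and> B \<noteq> {} \<and> C \<noteq> {} \<and> g ` T = convex hull {0, ind B, ind C}"
proof -
  obtain a b c where abc: "a \<in> V" "b \<in> V" "c \<in> V" "a \<noteq> b" "a \<noteq> c" "b \<noteq> c"
    "T = convex hull {a,b,c}" "vec_angle (b - a) (c - a) = pi / 2"
    using assms unfolding right_zo_triangle_def by blast
  have inn: "inner (b - a) (c - a) = 0" using angle_inner abc by blast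
  define A where "A = {i. a$i = 1}"
  define g where "g = hyperoct_map id A"
  have gH: "g \<in> hyperoct" unfolding g_def hyperoct_def using permutes_id by blast
  have ga: "g a = 0" using abc(1) unfolding g_def hyperoct_map_def A_def cube_vertices_def
    by (auto simp: vec_eq_iff)
  have gx: "g x = ind {i. x$i \<noteq> a$i}" if "x \<in> V" for x
    using abc(1) that unfolding g_def hyperoct_map_def A_def cube_vertices_def ind_def
    by (auto simp: vec_eq_iff) (metis zero_neq_one)+
  define B where "B = {i. b$i \<noteq> a$i}"
  define C where "C = {i. c$i \<noteq> a$i}"
  have terms: "\<And>i. (b - a) $ i * (c - a) $ i \<ge> 0"
    and pos: "\<And>i. i \<in> B \<inter> C \<Longrightarrow> (b - a) $ i * (c - a) $ i > 0"
  proof -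
    fix i
    have "a$i = 0 \<or> a$i = 1" "b$i = 0 \<or> b$i = 1" "c$i = 0 \<or> c$i = 1"
      using abc unfolding cube_vertices_def by auto
    then show "(b - a) $ i * (c - a) $ i \<ge> 0" by auto
    assume "i \<in> B \<inter> C"
    with \<open>a$i = 0 \<or> a$i = 1\<close> \<open>b$i = 0 \<or> b$i = 1\<close> \<open>c$i = 0 \<or> c$i = 1\<close>
    show "(b - a) $ i * (c - a) $ i > 0" unfolding B_def C_def by auto
  qed
  have "(\<Sum>i\<in>UNIV. (b - a) $ i * (c - a) $ i) = 0" using inn unfolding inner_vec_def by simp
  then have "\<forall>i\<in>UNIV. (b - a) $ i * (c - a) $ i = 0"
    using sum_nonneg_eq_0_iff[of UNIV "\<lambda>i. (b - a) $ i * (c - a) $ i"] terms by auto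
  then have BC: "B \<inter> C = {}" using pos by (metis disjoint_iff_not_equal IntI UNIV_I less_irrefl)
  have "B \<noteq> {}" using abc(4) unfolding B_def by (auto simp: vec_eq_iff) (metis)
  moreover have "C \<noteq> {}" using abc(5) unfolding C_def by (auto simp: vec_eq_iff) (metis)
  moreover have "g ` T = convex hull {0, ind B, ind C}"
    using H_hull[OF gH] abc ga gx B_def C_def by simp
  ultimately show ?thesis using gH BC by blast
qed

lemma perm_map:
  assumes "B \<inter> C = {}" "B' \<inter> C' = {}" "card B = card B'" "card C = card C'"
  shows "\<exists>g\<in>hyperoct. g ` (convex hull {0, ind B, ind C :: real^'n}) = convex hull {0, ind B', ind C'}"
proof -
  obtain f1 where f1: "bij_betw f1 B' B" using finite_same_card_bij[of B' B] assms by auto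
  obtain f2 where f2: "bij_betw f2 C' C" using finite_same_card_bij[of C' C] assms by auto
  have "card (- (B' \<union> C')) = card (- (B \<union> C))"
    using assms by (simp add: Compl_eq_Diff_UNIV card_Diff_subset card_Un_disjoint)
  then obtain f3 where f3: "bij_betw f3 (- (B' \<union> C')) (- (B \<union> C))"
    using finite_same_card_bij[of "- (B' \<union> C')" "- (B \<union> C)"] by auto
  define \<sigma> where "\<sigma> x = (if x \<in> B' then f1 x else if x \<in> C' then f2 x else f3 x)" for x
  have s1: "bij_betw \<sigma> B' B" using f1 unfolding \<sigma>_def by (rule bij_betw_cong[THEN iffD1, rotated]) auto
  have s2: "bij_betw \<sigma> C' C" using f2 assms(2) unfolding \<sigma>_def
    by (intro bij_betw_cong[THEN iffD1, OF _ f2]) auto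
  have s3: "bij_betw \<sigma> (- (B' \<union> C')) (- (B \<union> C))" unfolding \<sigma>_def
    by (intro bij_betw_cong[THEN iffD1, OF _ f3]) auto
  have "bij_betw \<sigma> ((B' \<union> C') \<union> - (B' \<union> C')) ((B \<union> C) \<union> - (B \<union> C))"
    by (intro bij_betw_combine s1 s2 s3) (use assms in auto)
  moreover have "(B' \<union> C') \<union> - (B' \<union> C') = UNIV" "(B \<union> C) \<union> - (B \<union> C) = UNIV" by auto
  ultimately have "bij_betw \<sigma> UNIV UNIV" by metis
  then have sp: "\<sigma> permutes UNIV" by (intro bij_imp_permutes) auto
  define g where "g = hyperoct_map \<sigma> {}"
  have gH: "g \<in> hyperoct" unfolding g_def hyperoct_def using sp by blast
  have sB: "\<sigma> i \<in> B \<longleftrightarrow> i \<in> B'" for i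
    using s1 s2 s3 assms(1) unfolding bij_betw_def by (cases "i \<in> B'"; cases "i \<in> C'") auto
  have sC: "\<sigma> i \<in> C \<longleftrightarrow> i \<in> C'" for i
    using s1 s2 s3 assms(1) unfolding bij_betw_def by (cases "i \<in> B'"; cases "i \<in> C'") auto
  have "g 0 = 0" "g (ind B) = ind B'" "g (ind C) = ind C'"
    unfolding g_def hyperoct_map_def ind_def using sB sC by (auto simp: vec_eq_iff)
  then show ?thesis using H_hull[OF gH] gH by metis
qed



lemma Dset_H:
  assumes "right_zo_triangle (T :: (real^'n) set)" "g \<in> hyperoct"
  shows "Dset (g ` T) = Dset T"
proof -
  obtain a b c where abc: "a \<in> V" "b \<in> V" "c \<in> V" "a \<noteq> b" "a \<noteq> c" "b \<noteq> c"
    "T = convex hull {a,b,c}"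
    using assms unfolding right_zo_triangle_def by blast
  have n: "norm (g x - g y) = norm (x - y)" for x y using H_norm[OF assms(2)] .
  have d: "g a \<noteq> g b" "g a \<noteq> g c" "g b \<noteq> g c" using abc n
    by (metis eq_iff_diff_eq_0 norm_eq_zero)+
  show ?thesis using Dset_tri[OF H_V[OF assms(2) abc(1)] H_V[OF assms(2) abc(2)] H_V[OF assms(2) abc(3)] d]
      Dset_tri[OF abc(1-6)] H_hull[OF assms(2)] abc(7) n by simp
qed

lemma right_Dset:
  assumes "right_zo_triangle (T :: (real^'n) set)"
  obtains g B C where "g \<in> hyperoct" "B \<inter> C = {}" "B \<noteq> {}" "C \<noteq> {}"
    "g ` T = convex hull {0, ind B, ind C}"
    "Dset T = {real (card B), real (card C), real (card B) + real (card C)}"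
  using normal_form[OF assms] Dset_H[OF assms] Dset_normal by metis

lemma set3_eq:
  fixes p q p' q' :: real
  assumes "1 \<le> p" "1 \<le> q" "1 \<le> p'" "1 \<le> q'" "{p,q,p+q} = {p',q',p'+q'}"
  shows "(p = p' \<and> q = q') \<or> (p = q' \<and> q = p')"
proof -
  have m: "x \<in> {p',q',p'+q'} \<longleftrightarrow> x \<in> {p,q,p+q}" for x using assms(5) by simp
  have a1: "p+q = p' \<or> p+q = q' \<or> p+q = p'+q'" using m[of "p+q"] by simp
  have a2: "p'+q' = p \<or> p'+q' = q \<or> p'+q' = p+q" using m[of "p'+q'"] by simp
  have s: "p + q = p' + q'" using a1 a2 assms(1-4) by linarith
  have "p = p' \<or> p = q' \<or> p = p'+q'" using m[of p] by simp
  then show ?thesis using s assms(1-4) by auto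
qed

lemma orbit_iff:
  assumes "right_zo_triangle (T :: (real^'n) set)" "right_zo_triangle T'"
  shows "B_orbit T = B_orbit T' \<longleftrightarrow> Dset T = Dset T'"
proof
  assume "B_orbit T = B_orbit T'"
  moreover have "T' \<in> B_orbit T'"
  proof -
    have "T' = id ` T'" by simp
    then show ?thesis unfolding B_orbit_def using H_id by blast
  qed
  ultimately have "T' \<in> B_orbit T" by simp
  then obtain g where "g \<in> hyperoct" "T' = g ` T" unfolding B_orbit_def by auto
  then show "Dset T = Dset T'" using Dset_H[OF assms(1)] by simp
next
  assume eq: "Dset T = Dset T'"
  obtain g B C where g: "g \<in> hyperoct" "B \<inter> C = {}" "B \<noteq> {}" "C \<noteq> {}"
    "g ` T = convex hull {0, ind B, ind C}"
    "Dset T = {real (card B), real (card C), real (card B) + real (card C)}"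
    using right_Dset[OF assms(1)] by blast
  obtain g' B' C' where g': "g' \<in> hyperoct" "B' \<inter> C' = {}" "B' \<noteq> {}" "C' \<noteq> {}"
    "g' ` T' = convex hull {0, ind B', ind C'}"
    "Dset T' = {real (card B'), real (card C'), real (card B') + real (card C')}"
    using right_Dset[OF assms(2)] by blast
  have c: "card B \<ge> 1" "card C \<ge> 1" "card B' \<ge> 1" "card C' \<ge> 1"
    using g g' by (auto simp: Suc_le_eq card_gt_0_iff)
  have "(card B = card B' \<and> card C = card C') \<or> (card B = card C' \<and> card C = card B')"
    using set3_eq[of "real (card B)" "real (card C)" "real (card B')" "real (card C')"] c eq g(6) g'(6)
    by simp
  then obtain h where h: "h \<in> hyperoct" "h ` (g ` T) = g' ` T'"
  proof
    assume "card B = card B' \<and> card C = card C'"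
    then show ?thesis using perm_map[OF g(2) g'(2)] g(5) g'(5) that by metis
  next
    assume "card B = card C' \<and> card C = card B'"
    moreover have "C' \<inter> B' = {}" using g'(2) by auto
    moreover have "convex hull {0, ind C', ind B'} = g' ` T'" using g'(5) by (simp add: insert_commute)
    ultimately show ?thesis using perm_map[OF g(2), of C' B'] g(5) that by metis
  qed
  have "B_orbit T = B_orbit (g ` T)" using orbit_inv[OF g(1)] by simp
  also have "\<dots> = B_orbit (h ` (g ` T))" using orbit_inv[OF h(1)] by simp
  also have "\<dots> = B_orbit T'" using h(2) orbit_inv[OF g'(1)] by simp
  finally show "B_orbit T = B_orbit T'" .
qed

lemma card_image_eqv:
  assumes "\<forall>x\<in>A. \<forall>y\<in>A. f x = f y \<longleftrightarrow> g x = g y"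
  shows "card (f ` A) = card (g ` A)"
proof -
  define s where "s u = (SOME x. x \<in> A \<and> f x = u)" for u
  have s: "s (f x) \<in> A \<and> f (s (f x)) = f x" if "x \<in> A" for x
    unfolding s_def by (rule someI[of _ x]) (use that in auto)
  have "(\<lambda>u. g (s u)) ` (f ` A) = g ` A"
  proof -
    have "g (s (f x)) = g x" if "x \<in> A" for x using s[OF that] assms that by blast
    then show ?thesis by (auto simp: image_iff)
  qed
  moreover have "inj_on (\<lambda>u. g (s u)) (f ` A)"
  proof (rule inj_onI)
    fix u v assume "u \<in> f ` A" "v \<in> f ` A" "g (s u) = g (s v)"
    then obtain x y where "x \<in> A" "y \<in> A" "u = f x" "v = f y" "g (s (f x)) = g (s (f y))" by auto
    then show "u = v" using s assms by metis
  qed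
  ultimately show ?thesis using card_image by metis
qed



definition Q :: "nat \<Rightarrow> (nat \<times> nat) set" where
  "Q n = {(p,q). 1 \<le> p \<and> p \<le> q \<and> p + q \<le> n}"

lemma Q_finite: "finite (Q n)"
  by (rule finite_subset[of _ "{0..n} \<times> {0..n}"]) (auto simp: Q_def)

lemma card_Q: "card (Q n) = (n div 2) * ((n + 1) div 2)"
proof (induction n)
  case 0
  have "Q 0 = {}" by (auto simp: Q_def)
  then show ?case by simp
next
  case (Suc n)
  define E where "E = {(p,q). 1 \<le> p \<and> p \<le> q \<and> p + q = Suc n}"
  have QS: "Q (Suc n) = Q n \<union> E" by (auto simp: Q_def E_def)
  have dj: "Q n \<inter> E = {}" by (auto simp: Q_def E_def)
  have E_eq: "E = (\<lambda>p. (p, Suc n - p)) ` {1..Suc n div 2}"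
    by (auto simp: E_def image_iff)
  have "card E = Suc n div 2"
    unfolding E_eq by (subst card_image) (auto simp: inj_on_def)
  moreover have "finite E" unfolding E_eq by simp
  ultimately have "card (Q (Suc n)) = card (Q n) + Suc n div 2"
    using QS dj Q_finite card_Un_disjoint by metis
  also have "\<dots> = Suc n div 2 * ((Suc n + 1) div 2)" unfolding Suc.IH
  proof -
    obtain k where "n = 2*k \<or> n = 2*k+1" by (metis dvd_mult_div_cancel odd_two_times_div_two_succ)
    then show "n div 2 * ((n + 1) div 2) + Suc n div 2 = Suc n div 2 * ((Suc n + 1) div 2)"
      by (elim disjE) (simp_all add: algebra_simps)
  qed
  finally show ?case .
qed

lemma floor_ceil:
  "\<lfloor>real n / 2\<rfloor> * \<lceil>real n / 2\<rceil> = int ((n div 2) * ((n + 1) div 2))"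
proof -
  obtain k where "n = 2*k \<or> n = 2*k+1" by (metis dvd_mult_div_cancel odd_two_times_div_two_succ)
  then show ?thesis
  proof
    assume "n = 2*k" then show ?thesis by simp
  next
    assume n: "n = 2*k+1"
    have "real n / 2 = real k + 1/2" using n by simp
    moreover have "\<lfloor>real k + 1/2\<rfloor> = int k" by (intro floor_unique) auto
    moreover have "\<lceil>real k + 1/2\<rceil> = int k + 1" by (intro ceiling_unique) auto
    moreover have "n div 2 = k" "(n+1) div 2 = k + 1" using n by auto
    ultimately show ?thesis by (simp only:) (simp add: algebra_simps)
  qed
qed



definition Fm :: "nat \<times> nat \<Rightarrow> real set" where
  "Fm pq = {real (fst pq), real (snd pq), real (fst pq) + real (snd pq)}"

lemma Dset_image:
  "Dset ` {T :: (real^'n) set. right_zo_triangle T} = Fm ` Q CARD('n)"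
proof
  show "Dset ` {T :: (real^'n) set. right_zo_triangle T} \<subseteq> Fm ` Q CARD('n)"
  proof
    fix X assume "X \<in> Dset ` {T :: (real^'n) set. right_zo_triangle T}"
    then obtain T :: "(real^'n) set" where T: "right_zo_triangle T" "X = Dset T" by auto
    obtain g B C where g: "g \<in> hyperoct" "B \<inter> C = {}" "B \<noteq> {}" "C \<noteq> {}"
      "g ` T = convex hull {0, ind B, ind C}"
      "Dset T = {real (card B), real (card C), real (card B) + real (card C)}"
      by (rule right_Dset[OF T(1)])
    have c: "card B \<ge> 1" "card C \<ge> 1" using g by (auto simp: Suc_le_eq card_gt_0_iff)
    have "card B + card C = card (B \<union> C)" using g(2) by (simp add: card_Un_disjoint)
    also have "\<dots> \<le> CARD('n)" by (rule card_mono) auto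
    finally have le: "card B + card C \<le> CARD('n)" .
    show "X \<in> Fm ` Q CARD('n)"
    proof (cases "card B \<le> card C")
      case True
      then have "(card B, card C) \<in> Q CARD('n)" using c le by (auto simp: Q_def)
      moreover have "X = Fm (card B, card C)" using T g by (simp add: Fm_def)
      ultimately show ?thesis by blast
    next
      case False
      then have "(card C, card B) \<in> Q CARD('n)" using c le by (auto simp: Q_def)
      moreover have "X = Fm (card C, card B)" proof -
        have "X = {real (card B), real (card C), real (card B) + real (card C)}" using T g by simp
        also have "\<dots> = Fm (card C, card B)" unfolding Fm_def by auto
        finally show ?thesis .
      qed
      ultimately show ?thesis by blast
    qed
  qed
next
  show "Fm ` Q CARD('n) \<subseteq> Dset ` {T :: (real^'n) set. right_zo_triangle T}"
  proof
    fix X assume "X \<in> Fm ` Q CARD('n)"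
    then obtain p q where pq: "1 \<le> p" "p \<le> q" "p + q \<le> CARD('n)" "X = Fm (p,q)"
      by (auto simp: Q_def)
    obtain S :: "'n set" where S: "card S = p + q" "finite S"
      using obtain_subset_with_card_n[of "p+q" "UNIV :: 'n set"] pq by auto
    obtain B where B: "B \<subseteq> S" "card B = p" "finite B"
      using obtain_subset_with_card_n[of p S] S by auto
    define C where "C = S - B"
    have C: "card C = q" unfolding C_def using B S by (simp add: card_Diff_subset)
    have BC1: "B \<inter> C = {}" unfolding C_def by blast
    have BC2: "B \<noteq> {}" using B pq by (metis card.empty not_one_le_zero)
    have BC3: "C \<noteq> {}" using C pq by (metis card.empty le_zero_eq not_one_le_zero)
    note BC = BC1 BC2 BC3
    define T where "T = convex hull {0, ind B, ind C :: real^'n}"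
    have d: "0 \<noteq> ind B" "0 \<noteq> ind C" "ind B \<noteq> ind C"
      using BC ind_eq[of B "{}"] ind_eq[of C "{}"] ind_eq[of B C] by (auto simp: ind_empty)
    have "vec_angle (ind B - 0) (ind C - 0) = pi / 2"
      unfolding vec_angle_def using inner_ind[OF BC(1)] by simp
    then have "right_zo_triangle T" unfolding right_zo_triangle_def T_def
      using zero_V ind_V[of B] ind_V[of C] d by (intro exI[of _ 0] exI[of _ "ind B"] exI[of _ "ind C"]) simp
    moreover have "Dset T = X" unfolding T_def Dset_normal[OF BC] using pq B C by (simp add: Fm_def)
    ultimately show "X \<in> Dset ` {T :: (real^'n) set. right_zo_triangle T}" by blast
  qed
qed

lemma Fm_inj: "inj_on Fm (Q n)"
proof (rule inj_onI)
  fix x y assume x: "x \<in> Q n" and y: "y \<in> Q n" and e: "Fm x = Fm y"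
  obtain p q where xp: "x = (p,q)" by (cases x)
  obtain p' q' where yp: "y = (p',q')" by (cases y)
  have c: "1 \<le> p" "p \<le> q" "1 \<le> p'" "p' \<le> q'" using x y xp yp by (auto simp: Q_def)
  have "{real p, real q, real p + real q} = {real p', real q', real p' + real q'}"
    using e xp yp by (simp add: Fm_def)
  then have "(real p = real p' \<and> real q = real q') \<or> (real p = real q' \<and> real q = real p')"
    using set3_eq[of "real p" "real q" "real p'" "real q'"] c by simp
  then have "p = p' \<and> q = q'" using c by auto
  then show "x = y" using xp yp by simp
qed

theorem corollary4p19:
  shows "int (card (B_orbit ` {T :: (real^'n) set. right_zo_triangle T}))
           = \<lfloor>real CARD('n) / 2\<rfloor> * \<lceil>real CARD('n) / 2\<rceil>"
proof -
  have "card (B_orbit ` {T :: (real^'n) set. right_zo_triangle T})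
      = card (Dset ` {T :: (real^'n) set. right_zo_triangle T})"
    by (rule card_image_eqv) (auto simp: orbit_iff)
  also have "\<dots> = card (Q CARD('n))" unfolding Dset_image by (rule card_image[OF Fm_inj])
  finally show ?thesis by (simp add: card_Q floor_ceil)
qed


end
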